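(* Let $f(\xi) = i e^{\xi}$ on $U=\{\xi\in\mathbb{C} : |\operatorname{Im}\xi|<\pi/2\}$. Then the domain of the Burgers transform of $f$ is $\Omega_f = \mathbb{R}^2$. Moreover, with $\lambda=\mathcal{B}[f]$, $w_0=y-\lambda x$ and $J(x,y) = 1 + f'(w_0)\,x$, one has $|J(x,y)| \geq 1$ for all $(x,y) \in \mathbb{R}^2$, with equality only at $x = 0$.
   Context: $\mathbb{C}_+$ is the upper half-plane; $f$ maps $U$ into $\mathbb{C}_+$. The Burgers transform $\mathcal{B}[f]\colon\Omega_f\to\mathbb{C}_+$ is defined implicitly by $\mathcal{B}[f](x,y) = f(y - \mathcal{B}[f](x,y)\, x)$, where $\Omega_f \subseteq \mathbb{R}^2$ is the maximal open set on which this equation admits a unique $C^1$ solution with positive imaginary part. (Explicitly, $\mathcal{B}[f](x,y) = W_0(ixe^y)/x$ for $x\ne0$, with $W_0$ the principal branch of the Lambert $W$ function, and $\mathcal{B}[f](0,y)=ie^y$.) *)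

theory Defs
  imports "HOL-Analysis.Analysis"
begin

definition C1_on :: "(real \<times> real) set \<Rightarrow> (real \<times> real \<Rightarrow> complex) \<Rightarrow> bool" where
  "C1_on \<Omega> g \<longleftrightarrow> (\<exists>g' :: real \<times> real \<Rightarrow> ((real \<times> real) \<Rightarrow>\<^sub>L complex).
      (\<forall>p\<in>\<Omega>. (g has_derivative blinfun_apply (g' p)) (at p)) \<and> continuous_on \<Omega> g')"

definition burgers_solution ::
  "(complex \<Rightarrow> complex) \<Rightarrow> complex set \<Rightarrow> (real \<times> real) set \<Rightarrow> (real \<times> real \<Rightarrow> complex) \<Rightarrow> bool" where
  "burgers_solution f U \<Omega> g \<longleftrightarrow>
     C1_on \<Omega> g \<and>
     (\<forall>x y. (x, y) \<in> \<Omega> \<longrightarrow>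
        Im (g (x, y)) > 0 \<and>
        complex_of_real y - g (x, y) * complex_of_real x \<in> U \<and>
        g (x, y) = f (complex_of_real y - g (x, y) * complex_of_real x))"

definition burgers_admissible ::
  "(complex \<Rightarrow> complex) \<Rightarrow> complex set \<Rightarrow> (real \<times> real) set \<Rightarrow> bool" where
  "burgers_admissible f U \<Omega> \<longleftrightarrow> open \<Omega> \<and>
     (\<exists>g. burgers_solution f U \<Omega> g \<and>
          (\<forall>h. burgers_solution f U \<Omega> h \<longrightarrow> (\<forall>p\<in>\<Omega>. h p = g p)))"

text \<open>The domain Omega_f: the union of all admissible open sets (it is the maximal one
whenever a maximal admissible set exists).\<close>
definition burgers_domain :: "(complex \<Rightarrow> complex) \<Rightarrow> complex set \<Rightarrow> (real \<times> real) set" where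
  "burgers_domain f U = \<Union>{\<Omega>. burgers_admissible f U \<Omega>}"

end

theory Submission
  imports Defs
begin


definition phi :: "real \<Rightarrow> real" where
  "phi t = t * exp (t * tan t) / cos t"

definition Dphi :: "real \<Rightarrow> real" where
  "Dphi t = exp (t * tan t) / cos t * (1 + 2 * t * tan t + t^2 / (cos t)^2)"

lemma ttan_nonneg: assumes "\<bar>t\<bar> < pi/2" shows "0 \<le> t * tan t"
proof (cases "t \<ge> 0")
  case True
  then show ?thesis using assms tan_gt_zero[of t] by (cases "t = 0") auto
next
  case False
  then have "0 < tan (-t)" using assms by (intro tan_gt_zero) auto
  then show ?thesis using False by (simp add: mult_nonpos_nonpos)
qed

lemma cos_pos_I: "\<bar>t\<bar> < pi/2 \<Longrightarrow> 0 < cos t"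
  by (intro cos_gt_zero_pi) auto

lemma phi_deriv: assumes "\<bar>t\<bar> < pi/2" shows "(phi has_real_derivative Dphi t) (at t)"
proof -
  have c: "cos t > 0" using cos_pos_I[OF assms] .
  have "((\<lambda>t. t * exp (t * tan t) / cos t) has_real_derivative
     (((1 * exp (t * tan t) + t * (exp (t * tan t) * (1 * tan t + t * inverse ((cos t)^2)))) * cos t
       - t * exp (t * tan t) * (- sin t)) / (cos t * cos t))) (at t)"
    using c by (auto intro!: derivative_eq_intros)
  moreover have "(((1 * exp (t * tan t) + t * (exp (t * tan t) * (1 * tan t + t * inverse ((cos t)^2)))) * cos t
       - t * exp (t * tan t) * (- sin t)) / (cos t * cos t)) = Dphi t"
    using c unfolding Dphi_def tan_def by (simp add: field_simps power2_eq_square)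
  ultimately show ?thesis unfolding phi_def by simp
qed

lemma Dphi_pos: assumes "\<bar>t\<bar> < pi/2" shows "0 < Dphi t"
proof -
  have c: "cos t > 0" using cos_pos_I[OF assms] .
  have "0 \<le> t * tan t" using ttan_nonneg[OF assms] .
  then have "0 < 1 + 2 * t * tan t + t^2 / (cos t)^2" by (simp add: add_pos_nonneg)
  then show ?thesis unfolding Dphi_def using c by simp
qed

lemma phi_mono: assumes "\<bar>a\<bar> < pi/2" "\<bar>b\<bar> < pi/2" "a < b" shows "phi a < phi b"
proof (rule DERIV_pos_imp_increasing[OF assms(3)])
  fix x assume "a \<le> x" "x \<le> b"
  then have "\<bar>x\<bar> < pi/2" using assms by auto
  then show "\<exists>y. DERIV phi x :> y \<and> y > 0" using phi_deriv Dphi_pos by blast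
qed

lemma phi_inj: assumes "\<bar>a\<bar> < pi/2" "\<bar>b\<bar> < pi/2" "phi a = phi b" shows "a = b"
  using phi_mono[of a b] phi_mono[of b a] assms by (cases a b rule: linorder_cases) auto

lemma phi_odd: "phi (-t) = - phi t"
  unfolding phi_def by simp

lemma phi_0: "phi 0 = 0" unfolding phi_def by simp

lemma phi_surj_pos: assumes "0 \<le> c" shows "\<exists>t. \<bar>t\<bar> < pi/2 \<and> phi t = c"
proof -
  define T where "T = max 1 (2*c)"
  have "0 \<le> T" unfolding T_def by auto
  then obtain t1 where t1: "0 \<le> t1" "t1 < pi/2" "tan t1 = T"
    using tan_total_pos[of T] by auto
  have "pi/4 \<le> t1"
  proof (rule ccontr)
    assume "\<not> pi/4 \<le> t1"
    then have "tan t1 < tan (pi/4)" using t1 by (intro tan_monotone) auto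
    then show False using t1 tan_45 unfolding T_def by auto
  qed
  moreover have "pi/4 > 3/4" using pi_gt3 by simp
  ultimately have t1b: "t1 > 3/4" by linarith
  have c1: "0 < cos t1" "cos t1 \<le> 1" using cos_pos_I[of t1] t1 by auto
  have "phi t1 \<ge> t1 * exp (t1 * T)"
  proof -
    have "t1 * exp (t1 * T) * 1 \<le> t1 * exp (t1 * T) * (1 / cos t1)"
      using c1 t1b by (intro mult_left_mono) (auto simp: field_simps)
    then show ?thesis unfolding phi_def using t1 by simp
  qed
  moreover have "exp (t1 * T) \<ge> 1 + t1 * T" by (rule exp_ge_add_one_self)
  then have "t1 * exp (t1 * T) \<ge> t1 * (1 + t1 * T)" using t1 by (intro mult_left_mono) auto
  moreover have "t1 * (1 + t1 * T) \<ge> t1 * t1 * T" using t1b by (simp add: algebra_simps)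
  moreover have "t1 * t1 \<ge> 3/4 * (3/4)" using t1b by (intro mult_mono) auto
  then have "t1 * t1 \<ge> 1/2" by simp
  then have "t1 * t1 * T \<ge> 1/2 * T" using T_def by (intro mult_right_mono) auto
  moreover have "1/2 * T \<ge> c" unfolding T_def by auto
  ultimately have "c \<le> phi t1" by linarith
  moreover have "phi 0 \<le> c" using phi_0 assms by simp
  moreover have "\<forall>x. 0 \<le> x \<and> x \<le> t1 \<longrightarrow> isCont phi x"
    using t1 by (auto intro!: DERIV_isCont phi_deriv)
  ultimately obtain t where "0 \<le> t" "t \<le> t1" "phi t = c"
    using IVT[of phi 0 c t1] t1 by auto
  then show ?thesis using t1 by (intro exI[of _ t]) auto
qed

lemma phi_surj: "\<exists>t. \<bar>t\<bar> < pi/2 \<and> phi t = c"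
proof (cases "0 \<le> c")
  case True then show ?thesis by (rule phi_surj_pos)
next
  case False
  then obtain t where "\<bar>t\<bar> < pi/2" "phi t = -c" using phi_surj_pos[of "-c"] by auto
  then show ?thesis using phi_odd[of t] by (intro exI[of _ "-t"]) auto
qed

definition psi :: "real \<Rightarrow> real" where
  "psi c = (THE t. \<bar>t\<bar> < pi/2 \<and> phi t = c)"

lemma psi: "\<bar>psi c\<bar> < pi/2 \<and> phi (psi c) = c"
proof -
  have "\<exists>!t. \<bar>t\<bar> < pi/2 \<and> phi t = c" using phi_surj phi_inj by metis
  then show ?thesis unfolding psi_def by (rule theI')
qed

lemma psi_phi: "\<bar>t\<bar> < pi/2 \<Longrightarrow> psi (phi t) = t"
  using psi[of "phi t"] phi_inj by metis

lemma psi_cont: "isCont psi c"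
proof -
  define x where "x = psi c"
  define d where "d = (pi/2 - \<bar>x\<bar>)/2"
  have x: "\<bar>x\<bar> < pi/2" using psi x_def by auto
  have d: "0 < d" using x d_def by auto
  have "isCont psi (phi x)"
  proof (rule isCont_inverse_function[where f=phi and g=psi and x=x, OF d])
    fix z assume "\<bar>z - x\<bar> \<le> d"
    moreover have "\<bar>z\<bar> \<le> \<bar>x\<bar> + \<bar>z - x\<bar>" by linarith
    ultimately have z: "\<bar>z\<bar> < pi/2" using x d_def by (simp add: field_simps)
    show "psi (phi z) = z" using psi_phi[OF z] .
    show "isCont phi z" using phi_deriv[OF z] by (rule DERIV_isCont)
  qed
  then show ?thesis using psi x_def by simp
qed

lemma psi_deriv: "(psi has_real_derivative inverse (Dphi (psi c))) (at c)"
proof (rule DERIV_inverse_function[where a="c-1" and b="c+1"])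
  show "DERIV phi (psi c) :> Dphi (psi c)" using psi phi_deriv by blast
  show "Dphi (psi c) \<noteq> 0" using psi Dphi_pos by (metis less_irrefl)
qed (auto simp: psi psi_cont)

lemma Dphi_cont: "\<bar>t\<bar> < pi/2 \<Longrightarrow> isCont Dphi t"
  using cos_pos_I[of t] unfolding Dphi_def
  by (auto intro!: continuous_intros simp: tan_def)



definition dpsi :: "real \<Rightarrow> real" where "dpsi c = inverse (Dphi (psi c))"

lemma dpsi_cont: "isCont dpsi c"
proof -
  have "isCont (\<lambda>c. Dphi (psi c)) c"
    using Dphi_cont[of "psi c"] psi[of c] psi_cont[of c] by (simp add: isCont_o2)
  then show ?thesis unfolding dpsi_def using Dphi_pos[of "psi c"] psi[of c]
    by (auto intro!: continuous_intros)
qed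

definition TT :: "real \<times> real \<Rightarrow> real" where "TT p = psi (fst p * exp (snd p))"
definition SS :: "real \<times> real \<Rightarrow> real" where "SS p = TT p * tan (TT p)"
definition WW :: "real \<times> real \<Rightarrow> complex" where
  "WW p = complex_of_real (snd p) - complex_of_real (SS p) - \<i> * complex_of_real (TT p)"
definition GG :: "real \<times> real \<Rightarrow> complex" where "GG p = \<i> * exp (WW p)"

definition DT where "DT p h = (fst h * exp (snd p) + fst p * (snd h * exp (snd p))) * dpsi (fst p * exp (snd p))"
definition icos2 :: "real \<Rightarrow> real" where "icos2 t = inverse ((cos t)^2)"
definition dST :: "real \<Rightarrow> real" where "dST t = tan t + t * icos2 t"
definition DS where "DS p h = DT p h * dST (TT p)"
definition DW where "DW p h = complex_of_real (snd h) - complex_of_real (DS p h) - \<i> * complex_of_real (DT p h)"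
definition DG where "DG p h = \<i> * (exp (WW p) * DW p h)"

lemma TT_bound: "\<bar>TT p\<bar> < pi/2" unfolding TT_def using psi by blast

lemma TT_deriv: "(TT has_derivative DT p) (at p)"
proof -
  have u: "((\<lambda>p. fst p * exp (snd p)) has_derivative (\<lambda>h. fst h * exp (snd p) + fst p * (snd h * exp (snd p)))) (at p)"
    by (auto intro!: derivative_eq_intros)
  show ?thesis
    unfolding TT_def[abs_def] DT_def[abs_def]
    using DERIV_compose_FDERIV[OF psi_deriv u] unfolding dpsi_def .
qed

lemma TT_cont: "isCont TT p"
  using has_derivative_continuous[OF TT_deriv] .

lemma tt_deriv: "\<bar>t\<bar> < pi/2 \<Longrightarrow> ((\<lambda>t. t * tan t) has_real_derivative dST t) (at t)"
  using cos_pos_I[of t] unfolding dST_def icos2_def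
  by (auto intro!: derivative_eq_intros)

lemma SS_deriv: "(SS has_derivative DS p) (at p)"
  unfolding SS_def[abs_def] DS_def[abs_def]
  using DERIV_compose_FDERIV[OF tt_deriv[OF TT_bound] TT_deriv] .

lemma WW_deriv: "(WW has_derivative DW p) (at p)"
  unfolding WW_def[abs_def] DW_def[abs_def]
  by (auto intro!: derivative_eq_intros SS_deriv TT_deriv)

lemma GG_deriv: "(GG has_derivative DG p) (at p)"
  unfolding GG_def[abs_def] DG_def[abs_def]
  using has_derivative_mult_right[OF has_derivative_compose[OF WW_deriv has_field_derivative_imp_has_derivative[OF DERIV_exp]], of \<i>] by simp

lemma DG_cont: "isCont (\<lambda>q. DG q h) p"
proof -
  have c1: "isCont (\<lambda>q. dpsi (fst q * exp (snd q))) p"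
    by (rule isCont_o2[OF _ dpsi_cont]) (auto intro!: continuous_intros)
  have cT: "cos (TT p) \<noteq> 0" using cos_pos_I[OF TT_bound[of p]] by simp
  have c2: "isCont (\<lambda>q. tan (TT q)) p"
    by (rule isCont_o2[OF TT_cont]) (use cT in \<open>auto intro!: continuous_intros\<close>)
  have c3: "isCont (\<lambda>q. icos2 (TT q)) p"
    by (rule isCont_o2[OF TT_cont]) (use cT in \<open>auto intro!: continuous_intros simp: icos2_def\<close>)
  show ?thesis
    unfolding DG_def DW_def DS_def DT_def dST_def WW_def SS_def
    by (auto intro!: continuous_intros c1 c2 c3 TT_cont)
qed

lemma GG_C1: "C1_on UNIV GG"
proof -
  have bl: "bounded_linear (DG p)" for p using GG_deriv has_derivative_bounded_linear by blast
  define g' where "g' p = Blinfun (DG p)" for p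
  have ap: "blinfun_apply (g' p) = DG p" for p unfolding g'_def using bl bounded_linear_Blinfun_apply by blast
  have "continuous_on UNIV g'"
  proof (rule continuous_at_imp_continuous_on, intro ballI)
    fix p :: "real \<times> real"
    show "isCont g' p"
      by (rule continuous_blinfun_componentwiseI1) (simp add: ap DG_cont)
  qed
  then show ?thesis unfolding C1_on_def using GG_deriv ap by metis
qed



lemma phi_TT: "phi (TT (x,y)) = x * exp y" unfolding TT_def using psi by simp

lemma GG_eq: "GG (x,y) * complex_of_real x = complex_of_real (SS (x,y)) + \<i> * complex_of_real (TT (x,y))"
proof -
  define t where "t = TT (x,y)"
  define s where "s = SS (x,y)"
  have st: "s = t * tan t" unfolding s_def t_def SS_def by simp
  have c: "cos t > 0" using cos_pos_I TT_bound t_def by blast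
  have "t * exp s / cos t = x * exp y" using phi_TT[of x y] unfolding phi_def st t_def by simp
  then have E: "x * exp (y - s) = t / cos t" using c by (simp add: exp_diff field_simps)
  have W: "WW (x,y) = complex_of_real (y - s) + \<i> * complex_of_real (-t)"
    unfolding WW_def s_def t_def by simp
  show ?thesis
  proof (rule complex_eqI)
    have "Re (GG (x, y) * complex_of_real x) = x * exp (y - s) * sin t"
      unfolding GG_def W by (simp add: Re_exp Im_exp)
    also have "\<dots> = s" using E c st by (simp add: tan_def)
    finally show "Re (GG (x, y) * complex_of_real x) = Re (complex_of_real (SS (x, y)) + \<i> * complex_of_real (TT (x, y)))"
      by (simp add: s_def)
    have "Im (GG (x, y) * complex_of_real x) = x * exp (y - s) * cos t"
      unfolding GG_def W by (simp add: Re_exp Im_exp)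
    also have "\<dots> = t" using E c by simp
    finally show "Im (GG (x, y) * complex_of_real x) = Im (complex_of_real (SS (x, y)) + \<i> * complex_of_real (TT (x, y)))"
      by (simp add: t_def)
  qed
qed

lemma WW_eq: "complex_of_real y - GG (x,y) * complex_of_real x = WW (x,y)"
  unfolding GG_eq WW_def by simp

lemma GG_Im: "Im (GG p) > 0"
  unfolding GG_def WW_def using cos_pos_I[OF TT_bound[of p]] by (simp add: Re_exp Im_exp)

lemma WW_Im: "Im (WW p) = - TT p" unfolding WW_def by simp

lemma uniq:
  assumes eq: "lam = \<i> * exp (complex_of_real y - lam * complex_of_real x)"
    and bd: "\<bar>Im (complex_of_real y - lam * complex_of_real x)\<bar> < pi/2"
  shows "lam = GG (x,y)"
proof -
  define a where "a = Re lam"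
  define b where "b = Im lam"
  define t where "t = b * x"
  define s where "s = a * x"
  define w where "w = complex_of_real y - lam * complex_of_real x"
  have wre: "Re w = y - s" unfolding w_def s_def a_def by simp
  have wim: "Im w = - t" unfolding w_def t_def b_def by simp
  have tb: "\<bar>t\<bar> < pi/2" using bd wim w_def by simp
  have c: "cos t > 0" using cos_pos_I[OF tb] .
  have ea: "a = exp (y - s) * sin t" using arg_cong[OF eq, of Re] unfolding a_def w_def[symmetric]
    by (simp add: Re_exp Im_exp wre wim)
  have eb: "b = exp (y - s) * cos t" using arg_cong[OF eq, of Im] unfolding b_def w_def[symmetric]
    by (simp add: Re_exp Im_exp wre wim)
  define E where "E = exp (y - s)"
  have s1: "s = x * E * sin t" using ea E_def s_def by simp
  have t1: "t = x * E * cos t" using eb E_def t_def by simp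
  have "s * cos t = t * sin t" using s1 t1 by simp
  then have st: "s = t * tan t" using c unfolding tan_def by (simp add: field_simps)
  have "phi t = x * exp y"
  proof -
    have "phi t = t * exp s / cos t" unfolding phi_def st by simp
    also have "\<dots> = x * E * exp s" using c by (subst t1) simp
    also have "\<dots> = x * exp y" unfolding E_def by (simp add: exp_diff)
    finally show ?thesis .
  qed
  then have tT: "t = TT (x,y)" unfolding TT_def using psi_phi[OF tb] by simp
  then have sS: "s = SS (x,y)" unfolding SS_def st by simp
  have "w = WW (x,y)"
    by (rule complex_eqI) (simp_all add: wre wim WW_def tT[symmetric] sS[symmetric])
  then show ?thesis using eq w_def GG_def by simp
qed



lemma deriv_f: "deriv (\<lambda>\<xi>. \<i> * exp \<xi>) w = \<i> * exp w"
  by (auto intro!: DERIV_imp_deriv derivative_eq_intros)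

lemma TT_zero: "TT (x,y) = 0 \<Longrightarrow> x = 0"
  using phi_TT[of x y] phi_0 by simp

theorem theorem10p7:
  fixes f :: "complex \<Rightarrow> complex" and U :: "complex set"
  assumes f_def: "f = (\<lambda>\<xi>. \<i> * exp \<xi>)"
    and U_def: "U = {\<xi>. \<bar>Im \<xi>\<bar> < pi / 2}"
  shows "burgers_admissible f U UNIV \<and> burgers_domain f U = UNIV \<and>
    (\<forall>B. burgers_solution f U UNIV B \<longrightarrow>
       (\<forall>x y. let w0 = complex_of_real y - B (x, y) * complex_of_real x;
                  J = 1 + deriv f w0 * complex_of_real x
              in cmod J \<ge> 1 \<and> (cmod J = 1 \<longrightarrow> x = 0)))"
proof -
  have solG: "burgers_solution f U UNIV GG"
    unfolding burgers_solution_def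
  proof (intro conjI allI impI)
    show "C1_on UNIV GG" by (rule GG_C1)
    fix x y
    show "0 < Im (GG (x, y))" by (rule GG_Im)
    show "complex_of_real y - GG (x, y) * complex_of_real x \<in> U"
      unfolding WW_eq U_def using WW_Im TT_bound by simp
    show "GG (x, y) = f (complex_of_real y - GG (x, y) * complex_of_real x)"
      unfolding WW_eq f_def by (simp add: GG_def)
  qed
  have uniqB: "B p = GG p" if "burgers_solution f U UNIV B" for B p
  proof -
    obtain x y where p: "p = (x,y)" by (cases p)
    have "Im (B (x,y)) > 0 \<and> complex_of_real y - B (x, y) * complex_of_real x \<in> U \<and>
        B (x, y) = f (complex_of_real y - B (x, y) * complex_of_real x)"
      using that unfolding burgers_solution_def by blast
    then show ?thesis unfolding p using uniq[of "B (x,y)" y x] f_def U_def by auto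
  qed
  have adm: "burgers_admissible f U UNIV"
    unfolding burgers_admissible_def using solG uniqB by auto
  moreover have "burgers_domain f U = UNIV"
    unfolding burgers_domain_def using adm by blast
  moreover have "cmod J \<ge> 1 \<and> (cmod J = 1 \<longrightarrow> x = 0)"
    if B: "burgers_solution f U UNIV B" and
      J: "J = 1 + deriv f (complex_of_real y - B (x, y) * complex_of_real x) * complex_of_real x"
    for B x y J
  proof -
    have "J = 1 + GG (x,y) * complex_of_real x"
      unfolding J uniqB[OF B] WW_eq f_def deriv_f by (simp add: GG_def)
    then have J2: "J = complex_of_real (1 + SS (x,y)) + \<i> * complex_of_real (TT (x,y))"
      unfolding GG_eq by simp
    have S0: "SS (x,y) \<ge> 0" unfolding SS_def using ttan_nonneg[OF TT_bound] .
    have ReJ: "Re J = 1 + SS (x,y)" and ImJ: "Im J = TT (x,y)" unfolding J2 by simp_all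
    have "cmod J \<ge> \<bar>Re J\<bar>" by (rule abs_Re_le_cmod)
    then have ge: "cmod J \<ge> 1" using ReJ S0 by simp
    have "x = 0" if "cmod J = 1"
    proof -
      have "1 = (Re J)^2 + (Im J)^2" using that cmod_power2[of J] by simp
      moreover have "(Re J)^2 \<ge> 1" using ReJ S0
        by (metis abs_ge_self le_add_same_cancel1 one_le_power order_trans)
      ultimately have "(Im J)^2 = 0" by (smt (verit) zero_le_power2)
      then show ?thesis using ImJ TT_zero by simp
    qed
    then show ?thesis using ge by blast
  qed
  ultimately show ?thesis by (auto simp: Let_def)
qed

end
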